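(* Let $\mathcal N=(G,\beta,r)$ be a potential-based flow network with $G=(V,A)$, let $T^+,T^-\subseteq V$ be disjoint, $T=T^+\cup T^-$, and let $b\in B(T)$. Let $f$ be a potential-based $b$-transshipment with corresponding node potentials $\pi\in[0,\bar\pi]^V$, where $\bar\pi>0$. Then for every $X\subseteq T$ with $b(X)\ge0$ there is a potential-based $b'$-transshipment $f'$ in $\mathcal N$, for some balanced $b'\in\mathbb{R}^V$, with corresponding potentials $\pi'\in[0,\bar\pi]^V$, such that $$\{v: b'_v>0\}\subseteq T^+\cap X,\qquad \{v:b'_v<0\}\subseteq T^-\setminus X,\qquad \sum_{v\in T^+\cap X}b'_v=b(X).$$
   Context: A potential-based flow network $\mathcal N=(G,\beta,r)$ consists of a weakly connected directed multigraph $G=(V,A)$ without loops, resistances $\beta\in\mathbb{R}^A_{>0}$ and a degree $r>0$. For a balanced vector $b\in\mathbb{R}^V$ ($\sum_v b_v=0$), a potential-based $b$-transshipment is a flow $f\in\mathbb{R}^A$ together with potentials $\pi\in\mathbb{R}^V$ such that $\pi_u-\pi_v=\beta_a\,\mathrm{sign}(f_a)|f_a|^r$ for every arc $a=(u,v)$ and $\sum_{a\in\delta^+(v)}f_a-\sum_{a\in\delta^-(v)}f_a=b_v$ for all $v\in V$ ($\delta^+(v)$, $\delta^-(v)$: arcs leaving, resp. entering, $v$). $B(T)$ is the set of balanced $b\in\mathbb{R}^V$ with $b_v\ge0$ for $v\in T^+$, $b_v\le0$ for $v\in T^-$, and $b_v=0$ for $v\notin T$. For $X\subseteq T$, $b(X)=\sum_{v\in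 X}b_v$. *)

theory Defs
  imports Complex_Main
begin

text \<open>Vectors in R^V are functions on the node type (only values on V matter),
 vectors in R^A are functions on the arc type.\<close>

definition weakly_connected :: "'v set \<Rightarrow> 'e set \<Rightarrow> ('e \<Rightarrow> 'v) \<Rightarrow> ('e \<Rightarrow> 'v) \<Rightarrow> bool" where
  "weakly_connected V A tail head \<longleftrightarrow>
     (\<forall>u\<in>V. \<forall>v\<in>V. (u, v) \<in> ({(tail a, head a) | a. a \<in> A} \<union> {(head a, tail a) | a. a \<in> A})\<^sup>*)"

definition pb_network ::
  "'v set \<Rightarrow> 'e set \<Rightarrow> ('e \<Rightarrow> 'v) \<Rightarrow> ('e \<Rightarrow> 'v) \<Rightarrow> ('e \<Rightarrow> real) \<Rightarrow> real \<Rightarrow> bool" where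
  "pb_network V A tail head \<beta> r \<longleftrightarrow>
     finite V \<and> finite A \<and>
     (\<forall>a\<in>A. tail a \<in> V \<and> head a \<in> V \<and> tail a \<noteq> head a) \<and>
     weakly_connected V A tail head \<and>
     (\<forall>a\<in>A. \<beta> a > 0) \<and> r > 0"

definition balanced :: "'v set \<Rightarrow> ('v \<Rightarrow> real) \<Rightarrow> bool" where
  "balanced V b \<longleftrightarrow> (\<Sum>v\<in>V. b v) = 0"

definition B_T :: "'v set \<Rightarrow> 'v set \<Rightarrow> 'v set \<Rightarrow> ('v \<Rightarrow> real) set" where
  "B_T V Tp Tm = {b. balanced V b \<and> (\<forall>v\<in>Tp. b v \<ge> 0) \<and> (\<forall>v\<in>Tm. b v \<le> 0)
                    \<and> (\<forall>v\<in>V - (Tp \<union> Tm). b v = 0)}"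

definition pb_transshipment ::
  "'v set \<Rightarrow> 'e set \<Rightarrow> ('e \<Rightarrow> 'v) \<Rightarrow> ('e \<Rightarrow> 'v) \<Rightarrow> ('e \<Rightarrow> real) \<Rightarrow> real \<Rightarrow>
   ('v \<Rightarrow> real) \<Rightarrow> ('e \<Rightarrow> real) \<Rightarrow> ('v \<Rightarrow> real) \<Rightarrow> bool" where
  "pb_transshipment V A tail head \<beta> r b f \<pi> \<longleftrightarrow>
     (\<forall>a\<in>A. \<pi> (tail a) - \<pi> (head a) = \<beta> a * (sgn (f a) * \<bar>f a\<bar> powr r)) \<and>
     (\<forall>v\<in>V. (\<Sum>a\<in>{a\<in>A. tail a = v}. f a) - (\<Sum>a\<in>{a\<in>A. head a = v}. f a) = b v)"

end

theory Submission
  imports Defs "HOL-Analysis.Analysis"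
begin

definition gf :: "real \<Rightarrow> real \<Rightarrow> real \<Rightarrow> real" where
  "gf c r d = sgn d * (\<bar>d\<bar> / c) powr (1 / r)"

lemma gf_zero[simp]: "gf c r 0 = 0" by (simp add: gf_def)

lemma gf_mono:
  assumes c: "c > 0" and r: "r > 0" and xy: "x \<le> y"
  shows "gf c r x \<le> gf c r y"
proof -
  have p: "0 \<le> 1 / r" using r by simp
  consider "0 \<le> x" | "x < 0" "0 \<le> y" | "y < 0" using xy by linarith
  then show ?thesis
  proof cases
    case 1
    then have "(\<bar>x\<bar> / c) powr (1/r) \<le> (\<bar>y\<bar> / c) powr (1/r)"
      using xy c by (intro powr_mono2[OF p]) (auto simp: divide_right_mono)
    then show ?thesis using 1 xy unfolding gf_def
      by (cases "x = 0"; cases "y = 0") (auto simp: sgn_if)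
  next
    case 2
    have "0 \<le> (\<bar>y\<bar> / c) powr (1/r)" "0 \<le> (\<bar>x\<bar> / c) powr (1/r)" by simp_all
    have "gf c r x = - ((\<bar>x\<bar> / c) powr (1/r))" using 2 by (simp add: gf_def)
    moreover have "gf c r y = (\<bar>y\<bar> / c) powr (1/r)" using 2 by (cases "y = 0") (simp_all add: gf_def)
    ultimately show ?thesis by (smt (verit, best) \<open>0 \<le> (\<bar>x\<bar> / c) powr (1/r)\<close> \<open>0 \<le> (\<bar>y\<bar> / c) powr (1/r)\<close>)
  next
    case 3
    then have "(\<bar>y\<bar> / c) powr (1/r) \<le> (\<bar>x\<bar> / c) powr (1/r)"
      using xy c by (intro powr_mono2[OF p]) (auto simp: divide_right_mono divide_nonpos_pos)
    then show ?thesis using 3 xy c unfolding gf_def by (auto simp: sgn_if divide_nonpos_pos)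
  qed
qed

lemma gf_nonneg: "c > 0 \<Longrightarrow> r > 0 \<Longrightarrow> 0 \<le> d \<Longrightarrow> 0 \<le> gf c r d"
  using gf_mono[of c r 0 d] by simp

lemma gf_nonpos: "c > 0 \<Longrightarrow> r > 0 \<Longrightarrow> d \<le> 0 \<Longrightarrow> gf c r d \<le> 0"
  using gf_mono[of c r d 0] by simp

lemma gf_inv:
  assumes c: "c > 0" and r: "r > 0"
  shows "c * (sgn (gf c r d) * \<bar>gf c r d\<bar> powr r) = d"
proof (cases "d = 0")
  case True then show ?thesis by simp
next
  case False
  have pos: "(\<bar>d\<bar> / c) powr (1/r) > 0" using False c by simp
  have s: "sgn (gf c r d) = sgn d" unfolding gf_def using pos by (simp add: sgn_mult)
  have a: "\<bar>gf c r d\<bar> = (\<bar>d\<bar> / c) powr (1/r)" unfolding gf_def using pos False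
    by (simp add: abs_mult)
  have "\<bar>gf c r d\<bar> powr r = \<bar>d\<bar> / c" unfolding a powr_powr using r c by simp
  then show ?thesis using s c by (simp add: sgn_mult_abs)
qed

lemma gf_unique:
  assumes c: "c > 0" and r: "r > 0" and e: "d = c * (sgn f * \<bar>f\<bar> powr r)"
  shows "f = gf c r d"
proof (cases "f = 0")
  case True then show ?thesis using e by simp
next
  case False
  have pos: "\<bar>f\<bar> powr r > 0" using False by simp
  have sd: "sgn d = sgn f" using e c pos by (simp add: sgn_mult)
  have ad: "\<bar>d\<bar> / c = \<bar>f\<bar> powr r" using e c pos False by (simp add: abs_mult)
  have "(\<bar>d\<bar> / c) powr (1/r) = \<bar>f\<bar>" unfolding ad powr_powr using r by simp
  then show ?thesis unfolding gf_def sd by (simp add: sgn_mult_abs)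
qed

lemma gf_cont:
  assumes c: "c > 0" and r: "r > 0"
  shows "continuous_on UNIV (gf c r)"
proof -
  have 1: "continuous_on {0..} (gf c r)"
  proof -
    have "continuous_on {0..} (\<lambda>d. (d / c) powr (1/r))"
      by (rule continuous_on_powr') (use c r in \<open>auto intro!: continuous_intros\<close>)
    then show ?thesis
      by (rule continuous_on_eq) (auto simp: gf_def sgn_if)
  qed
  have 2: "continuous_on {..0} (gf c r)"
  proof -
    have "continuous_on {..0} (\<lambda>d. ((- d) / c) powr (1/r))"
      by (rule continuous_on_powr') (use c r in \<open>auto intro!: continuous_intros simp: divide_nonpos_pos\<close>)
    then have "continuous_on {..0} (\<lambda>d. - (((- d) / c) powr (1/r)))"
      by (rule continuous_on_minus)
    then show ?thesis
      by (rule continuous_on_eq) (auto simp: gf_def sgn_if)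
  qed
  have "continuous_on ({0..} \<union> {..0}) (gf c r)"
    by (rule continuous_on_closed_Un[OF _ _ 1 2]) auto
  moreover have "{0..} \<union> {..0::real} = UNIV" by auto
  ultimately show ?thesis by simp
qed


definition FF :: "('e \<Rightarrow> 'v) \<Rightarrow> ('e \<Rightarrow> 'v) \<Rightarrow> ('e \<Rightarrow> real) \<Rightarrow> real \<Rightarrow> ('v \<Rightarrow> real) \<Rightarrow> 'e \<Rightarrow> real" where
  "FF tail head \<beta> r \<psi> a = gf (\<beta> a) r (\<psi> (tail a) - \<psi> (head a))"

definition NB :: "'e set \<Rightarrow> ('e \<Rightarrow> 'v) \<Rightarrow> ('e \<Rightarrow> 'v) \<Rightarrow> ('e \<Rightarrow> real) \<Rightarrow> real \<Rightarrow> ('v \<Rightarrow> real) \<Rightarrow> 'v \<Rightarrow> real" where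
  "NB A tail head \<beta> r \<psi> v = (\<Sum>a\<in>{a\<in>A. tail a = v}. FF tail head \<beta> r \<psi> a) - (\<Sum>a\<in>{a\<in>A. head a = v}. FF tail head \<beta> r \<psi> a)"

lemma cut_sum:
  fixes h :: "'e \<Rightarrow> real"
  assumes "finite A" "finite L"
  shows "(\<Sum>v\<in>L. (\<Sum>a\<in>{a\<in>A. tail a = v}. h a) - (\<Sum>a\<in>{a\<in>A. head a = v}. h a))
       = (\<Sum>a\<in>A. (if tail a \<in> L then h a else 0) - (if head a \<in> L then h a else 0))"
proof -
  have 1: "(\<Sum>v\<in>L. (\<Sum>a\<in>{a\<in>A. g a = v}. h a)) = (\<Sum>a\<in>A. (if g a \<in> L then h a else 0))" for g :: "'e \<Rightarrow> 'a"
  proof -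
    have "(\<Sum>v\<in>L. (\<Sum>a\<in>{a\<in>A. g a = v}. h a)) = (\<Sum>v\<in>L. \<Sum>a\<in>A. if g a = v then h a else 0)"
      using assms by (simp add: sum.inter_filter)
    also have "\<dots> = (\<Sum>a\<in>A. \<Sum>v\<in>L. if g a = v then h a else 0)" by (rule sum.swap)
    also have "\<dots> = (\<Sum>a\<in>A. (if g a \<in> L then h a else 0))"
      using assms by (simp add: sum.delta)
    finally show ?thesis .
  qed
  show ?thesis by (simp add: sum_subtractf 1)
qed

lemma NB_sum_cut:
  assumes "finite A" "finite L"
  shows "(\<Sum>v\<in>L. NB A tail head \<beta> r \<psi> v) = (\<Sum>a\<in>A. (if tail a \<in> L then FF tail head \<beta> r \<psi> a else 0) - (if head a \<in> L then FF tail head \<beta> r \<psi> a else 0))"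
  unfolding NB_def by (rule cut_sum[OF assms])

lemma NB_balanced:
  assumes "finite A" "finite V" "\<forall>a\<in>A. tail a \<in> V \<and> head a \<in> V"
  shows "(\<Sum>v\<in>V. NB A tail head \<beta> r \<psi> v) = 0"
  unfolding NB_sum_cut[OF assms(1,2)] using assms(3) by simp

lemma NB_compare:
  assumes fin: "finite A" "finite L" and bpos: "\<forall>a\<in>A. \<beta> a > 0" and r: "r > 0"
    and h1: "\<forall>a\<in>A. tail a \<in> L \<and> head a \<notin> L \<longrightarrow> \<psi>1 (tail a) - \<psi>1 (head a) \<le> \<psi>2 (tail a) - \<psi>2 (head a)"
    and h2: "\<forall>a\<in>A. head a \<in> L \<and> tail a \<notin> L \<longrightarrow> \<psi>2 (tail a) - \<psi>2 (head a) \<le> \<psi>1 (tail a) - \<psi>1 (head a)"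
  shows "(\<Sum>v\<in>L. NB A tail head \<beta> r \<psi>1 v) \<le> (\<Sum>v\<in>L. NB A tail head \<beta> r \<psi>2 v)"
  unfolding NB_sum_cut[OF fin]
proof (rule sum_mono)
  fix a assume a: "a \<in> A"
  have m1: "FF tail head \<beta> r \<psi>1 a \<le> FF tail head \<beta> r \<psi>2 a" if "tail a \<in> L" "head a \<notin> L"
    unfolding FF_def using a that h1 bpos r by (intro gf_mono) auto
  have m2: "FF tail head \<beta> r \<psi>2 a \<le> FF tail head \<beta> r \<psi>1 a" if "head a \<in> L" "tail a \<notin> L"
    unfolding FF_def using a that h2 bpos r by (intro gf_mono) auto
  show "(if tail a \<in> L then FF tail head \<beta> r \<psi>1 a else 0) - (if head a \<in> L then FF tail head \<beta> r \<psi>1 a else 0)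
     \<le> (if tail a \<in> L then FF tail head \<beta> r \<psi>2 a else 0) - (if head a \<in> L then FF tail head \<beta> r \<psi>2 a else 0)"
    using m1 m2 by auto
qed

lemma NB_point_mono:
  assumes fin: "finite A" and bpos: "\<forall>a\<in>A. \<beta> a > 0" and r: "r > 0"
    and eq: "\<psi>1 w = \<psi>2 w" and le: "\<And>u. \<psi>1 u \<le> \<psi>2 u"
  shows "NB A tail head \<beta> r \<psi>2 w \<le> NB A tail head \<beta> r \<psi>1 w"
proof -
  have "(\<Sum>v\<in>{w}. NB A tail head \<beta> r \<psi>2 v) \<le> (\<Sum>v\<in>{w}. NB A tail head \<beta> r \<psi>1 v)"
    by (rule NB_compare[OF fin _ bpos r]) (use eq le in \<open>auto simp: add_mono diff_mono\<close>)
  then show ?thesis by simp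
qed

lemma NB_max_nonneg:
  assumes bpos: "\<forall>a\<in>A. \<beta> a > 0" and r: "r > 0"
    and mx: "\<forall>a\<in>A. \<psi> (tail a) \<le> \<psi> w \<and> \<psi> (head a) \<le> \<psi> w"
  shows "0 \<le> NB A tail head \<beta> r \<psi> w"
proof -
  have "0 \<le> (\<Sum>a\<in>{a\<in>A. tail a = w}. FF tail head \<beta> r \<psi> a)"
    by (rule sum_nonneg) (use bpos r mx in \<open>auto simp: FF_def intro!: gf_nonneg\<close>)
  moreover have "(\<Sum>a\<in>{a\<in>A. head a = w}. FF tail head \<beta> r \<psi> a) \<le> 0"
    by (rule sum_nonpos) (use bpos r mx in \<open>auto simp: FF_def intro!: gf_nonpos\<close>)
  ultimately show ?thesis unfolding NB_def by simp
qed

lemma NB_min_nonpos: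
  assumes bpos: "\<forall>a\<in>A. \<beta> a > 0" and r: "r > 0"
    and mn: "\<forall>a\<in>A. \<psi> w \<le> \<psi> (tail a) \<and> \<psi> w \<le> \<psi> (head a)"
  shows "NB A tail head \<beta> r \<psi> w \<le> 0"
proof -
  have "(\<Sum>a\<in>{a\<in>A. tail a = w}. FF tail head \<beta> r \<psi> a) \<le> 0"
    by (rule sum_nonpos) (use bpos r mn in \<open>auto simp: FF_def intro!: gf_nonpos\<close>)
  moreover have "0 \<le> (\<Sum>a\<in>{a\<in>A. head a = w}. FF tail head \<beta> r \<psi> a)"
    by (rule sum_nonneg) (use bpos r mn in \<open>auto simp: FF_def intro!: gf_nonneg\<close>)
  ultimately show ?thesis unfolding NB_def by simp
qed

lemma gf_cont_comp:
  assumes "c > 0" "r > 0" "continuous_on S f"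
  shows "continuous_on S (\<lambda>x. gf c r (f x))"
  using continuous_on_compose2[OF gf_cont[OF assms(1,2)] assms(3)] by simp

lemma NB_cont:
  fixes S :: "'x::topological_space set"
  assumes bpos: "\<forall>a\<in>A. \<beta> a > 0" and r: "r > 0"
    and cont: "\<And>u. continuous_on S (\<lambda>x. P x u)"
  shows "continuous_on S (\<lambda>x. NB A tail head \<beta> r (P x) v)"
  unfolding NB_def FF_def
  using bpos r cont by (intro continuous_intros gf_cont_comp) auto


lemma compact_box:
  fixes K :: "'v \<Rightarrow> real set"
  assumes "\<And>i. compact (K i)"
  shows "compact (Pi\<^sub>E UNIV K)"
proof -
  have "compactin (product_topology (\<lambda>i. euclidean) UNIV) (Pi\<^sub>E UNIV K)"
    using assms by (simp add: compactin_PiE)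
  then show ?thesis by (simp add: euclidean_product_topology)
qed

lemma dirichlet:
  assumes net: "pb_network V A tail head \<beta> r"
    and SV: "S \<subseteq> V" and DV: "D \<subseteq> V" and SD: "S \<inter> D = {}" and pb: "pb > 0"
  shows "\<exists>\<phi>. (\<forall>v\<in>V. 0 \<le> \<phi> v \<and> \<phi> v \<le> pb) \<and> (\<forall>v\<in>S. \<phi> v = pb) \<and> (\<forall>v\<in>D. \<phi> v = 0)
        \<and> (\<forall>v\<in>V - S - D. NB A tail head \<beta> r \<phi> v = 0)"
proof -
  from net have finV: "finite V" and finA: "finite A" and ends: "\<forall>a\<in>A. tail a \<in> V \<and> head a \<in> V"
    and bpos: "\<forall>a\<in>A. \<beta> a > 0" and r: "r > 0"
    unfolding pb_network_def by auto
  let ?NB = "NB A tail head \<beta> r"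
  define K where "K v = (if v \<in> S then {pb} else if v \<in> D then {0} else if v \<in> V then {0..pb} else {0::real})" for v
  define I where "I = V - S - D"
  define C where "C = Pi\<^sub>E UNIV K \<inter> (\<Inter>v\<in>I. {\<psi>. ?NB \<psi> v \<le> 0})"
  have cK: "compact (K i)" for i unfolding K_def by auto
  have cont_NB: "continuous_on UNIV (\<lambda>\<psi>. ?NB \<psi> v)" for v
    by (rule NB_cont[OF bpos r]) simp
  have clo: "closed (\<Inter>v\<in>I. {\<psi>. ?NB \<psi> v \<le> 0})"
    by (intro closed_INT ballI closed_Collect_le cont_NB continuous_on_const)
  have compC: "compact C" unfolding C_def
    by (rule compact_Int_closed[OF compact_box[OF cK] clo])
  define \<psi>0 where "\<psi>0 u = (if u \<in> S then pb else 0)" for u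
  have "\<psi>0 \<in> C"
  proof -
    have "\<psi>0 \<in> Pi\<^sub>E UNIV K" using SD pb unfolding K_def \<psi>0_def by auto
    moreover have "?NB \<psi>0 v \<le> 0" if "v \<in> I" for v
      by (rule NB_min_nonpos[OF bpos r]) (use that pb in \<open>auto simp: I_def \<psi>0_def\<close>)
    ultimately show ?thesis unfolding C_def by auto
  qed
  then have Cne: "C \<noteq> {}" by auto
  have "continuous_on C (\<lambda>\<psi>. \<Sum>u\<in>V. \<psi> u)"
    by (intro continuous_intros continuous_on_product_then_coordinatewise continuous_on_id)
  from continuous_attains_sup[OF compC Cne this] obtain \<psi> where
    \<psi>C: "\<psi> \<in> C" and mx: "\<And>y. y \<in> C \<Longrightarrow> (\<Sum>u\<in>V. y u) \<le> (\<Sum>u\<in>V. \<psi> u)" by blast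
  have \<psi>K: "\<psi> u \<in> K u" for u using \<psi>C unfolding C_def by auto
  have \<psi>I: "?NB \<psi> v \<le> 0" if "v \<in> I" for v using \<psi>C that unfolding C_def by auto
  have rng: "0 \<le> \<psi> v \<and> \<psi> v \<le> pb" if "v \<in> V" for v
    using \<psi>K[of v] that pb unfolding K_def by (auto split: if_splits)
  have harm: "?NB \<psi> v = 0" if vI: "v \<in> I" for v
  proof (rule ccontr)
    assume "?NB \<psi> v \<noteq> 0"
    with \<psi>I[OF vI] have neg: "?NB \<psi> v < 0" by simp
    have vV: "v \<in> V" "v \<notin> S" "v \<notin> D" using vI unfolding I_def by auto
    have lt: "\<psi> v < pb"
    proof (rule ccontr)
      assume "\<not> \<psi> v < pb"
      then have "\<psi> v = pb" using rng[OF vV(1)] by simp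
      then have "0 \<le> ?NB \<psi> v"
        by (intro NB_max_nonneg[OF bpos r]) (use ends rng in \<open>auto\<close>)
      with neg show False by simp
    qed
    define h where "h e = ?NB (\<psi>(v := \<psi> v + e)) v" for e
    have ch: "continuous_on UNIV h" unfolding h_def
      by (rule NB_cont[OF bpos r]) (case_tac "u = v", auto intro!: continuous_intros)
    then have "(h \<longlongrightarrow> h 0) (at 0)" by (simp add: continuous_on_def)
    moreover have "h 0 < 0" using neg by (simp add: h_def)
    ultimately have "eventually (\<lambda>e. h e < 0) (at 0)" by (rule order_tendstoD(2))
    then obtain d where d: "d > 0" "\<And>e. e \<noteq> 0 \<Longrightarrow> dist e 0 < d \<Longrightarrow> h e < 0"
      unfolding eventually_at by auto
    define e where "e = min (d/2) (pb - \<psi> v)"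
    have e: "e > 0" "e \<le> pb - \<psi> v" "h e < 0" using d lt unfolding e_def by (auto intro!: d(2))
    define \<psi>' where "\<psi>' = \<psi>(v := \<psi> v + e)"
    have le: "\<psi> u \<le> \<psi>' u" for u using e unfolding \<psi>'_def by auto
    have "\<psi>' \<in> C"
    proof -
      have "\<psi>' u \<in> K u" for u
      proof (cases "u = v")
        case True then show ?thesis using vV e rng[OF vV(1)] unfolding \<psi>'_def K_def by auto
      next
        case False then show ?thesis using \<psi>K[of u] unfolding \<psi>'_def by auto
      qed
      then have "\<psi>' \<in> Pi\<^sub>E UNIV K" by auto
      moreover have "?NB \<psi>' w \<le> 0" if "w \<in> I" for w
      proof (cases "w = v")
        case True then show ?thesis using e unfolding h_def \<psi>'_def by simp
      next
        case False
        have "?NB \<psi>' w \<le> ?NB \<psi> w"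
          by (rule NB_point_mono[OF finA bpos r]) (use False le in \<open>auto simp: \<psi>'_def\<close>)
        with \<psi>I[OF that] show ?thesis by simp
      qed
      ultimately show ?thesis unfolding C_def by auto
    qed
    then have "(\<Sum>u\<in>V. \<psi>' u) \<le> (\<Sum>u\<in>V. \<psi> u)" by (rule mx)
    moreover have "(\<Sum>u\<in>V. \<psi>' u) = (\<Sum>u\<in>V. \<psi> u + (if u = v then e else 0))"
      unfolding \<psi>'_def by (intro sum.cong) auto
    moreover have "\<dots> = (\<Sum>u\<in>V. \<psi> u) + e"
      using finV vV by (simp add: sum.distrib)
    ultimately show False using e by simp
  qed
  show ?thesis
  proof (intro exI conjI ballI)
    fix v assume "v \<in> V" then show "0 \<le> \<psi> v" "\<psi> v \<le> pb" using rng by auto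
  next
    fix v assume "v \<in> S" then show "\<psi> v = pb" using \<psi>K[of v] unfolding K_def by auto
  next
    fix v assume "v \<in> D" then show "\<psi> v = 0" using \<psi>K[of v] SD unfolding K_def by (auto split: if_splits)
  next
    fix v assume "v \<in> V - S - D" then show "?NB \<psi> v = 0" using harm unfolding I_def by auto
  qed
qed


theorem theorem4:
  fixes V :: "'v set" and A :: "'e set" and tail head :: "'e \<Rightarrow> 'v"
    and \<beta> :: "'e \<Rightarrow> real" and r :: real
    and Tp Tm X :: "'v set" and b :: "'v \<Rightarrow> real"
    and f :: "'e \<Rightarrow> real" and \<pi> :: "'v \<Rightarrow> real" and \<pi>bar :: real
  assumes net: "pb_network V A tail head \<beta> r"
    and TpV: "Tp \<subseteq> V" and TmV: "Tm \<subseteq> V" and disj: "Tp \<inter> Tm = {}"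
    and bB: "b \<in> B_T V Tp Tm"
    and flow: "pb_transshipment V A tail head \<beta> r b f \<pi>"
    and pibar: "\<pi>bar > 0"
    and pi_range: "\<forall>v\<in>V. 0 \<le> \<pi> v \<and> \<pi> v \<le> \<pi>bar"
    and XT: "X \<subseteq> Tp \<union> Tm"
    and bX: "(\<Sum>v\<in>X. b v) \<ge> 0"
  shows "\<exists>b' f' \<pi>'. balanced V b' \<and> pb_transshipment V A tail head \<beta> r b' f' \<pi>' \<and>
           (\<forall>v\<in>V. 0 \<le> \<pi>' v \<and> \<pi>' v \<le> \<pi>bar) \<and>
           {v\<in>V. b' v > 0} \<subseteq> Tp \<inter> X \<and>
           {v\<in>V. b' v < 0} \<subseteq> Tm - X \<and>
           (\<Sum>v\<in>Tp \<inter> X. b' v) = (\<Sum>v\<in>X. b v)"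
proof -
  from net have finV: "finite V" and finA: "finite A" and ends: "\<forall>a\<in>A. tail a \<in> V \<and> head a \<in> V"
    and bpos: "\<forall>a\<in>A. \<beta> a > 0" and r: "r > 0"
    unfolding pb_network_def by auto
  let ?NB = "NB A tail head \<beta> r"
  let ?F = "FF tail head \<beta> r"
  from flow have pot: "\<forall>a\<in>A. \<pi> (tail a) - \<pi> (head a) = \<beta> a * (sgn (f a) * \<bar>f a\<bar> powr r)"
    and cons: "\<forall>v\<in>V. (\<Sum>a\<in>{a\<in>A. tail a = v}. f a) - (\<Sum>a\<in>{a\<in>A. head a = v}. f a) = b v"
    unfolding pb_transshipment_def by auto
  have fF: "f a = ?F \<pi> a" if "a \<in> A" for a
    unfolding FF_def using gf_unique[of "\<beta> a" r] pot bpos r that by blast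
  have bNB: "b v = ?NB \<pi> v" if "v \<in> V" for v
    unfolding NB_def using cons that fF by (auto intro!: sum.cong arg_cong2[where f = minus])
  from bB have bTp: "\<forall>v\<in>Tp. b v \<ge> 0" and bTm: "\<forall>v\<in>Tm. b v \<le> 0"
    and bO: "\<forall>v\<in>V - (Tp \<union> Tm). b v = 0" unfolding B_T_def by auto
  define S where "S = Tp \<inter> X"
  define D where "D = Tm - X"
  have SV: "S \<subseteq> V" and DV: "D \<subseteq> V" and SD: "S \<inter> D = {}"
    using TpV TmV unfolding S_def D_def by auto
  obtain \<phi> where \<phi>rng: "\<forall>v\<in>V. 0 \<le> \<phi> v \<and> \<phi> v \<le> \<pi>bar" and \<phi>S: "\<forall>v\<in>S. \<phi> v = \<pi>bar"
    and \<phi>D: "\<forall>v\<in>D. \<phi> v = 0" and \<phi>I: "\<forall>v\<in>V - S - D. ?NB \<phi> v = 0"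
    using dirichlet[OF net SV DV SD pibar] by blast
  have NBS: "0 \<le> ?NB \<phi> v" if "v \<in> S" for v
    by (rule NB_max_nonneg[OF bpos r]) (use that \<phi>S \<phi>rng ends in \<open>auto\<close>)
  have NBD: "?NB \<phi> v \<le> 0" if "v \<in> D" for v
    by (rule NB_min_nonpos[OF bpos r]) (use that \<phi>D \<phi>rng ends in \<open>auto\<close>)
  define c where "c = (\<Sum>v\<in>S. ?NB \<phi> v)"
  define bx where "bx = (\<Sum>v\<in>X. b v)"
  define L where "L = {v\<in>V - D. \<pi> v - \<phi> v \<le> 0}"
  have finL: "finite L" using finV unfolding L_def by auto
  have SL: "S \<subseteq> L" using SV SD \<phi>S pi_range unfolding L_def by auto
  have LV: "L \<subseteq> V" unfolding L_def by auto
  have key: "(\<Sum>v\<in>L. ?NB \<pi> v) \<le> (\<Sum>v\<in>L. ?NB \<phi> v)"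
  proof (rule NB_compare[OF finA finL bpos r])
    show "\<forall>a\<in>A. tail a \<in> L \<and> head a \<notin> L \<longrightarrow> \<pi> (tail a) - \<pi> (head a) \<le> \<phi> (tail a) - \<phi> (head a)"
    proof (intro ballI impI)
      fix a assume a: "a \<in> A" "tail a \<in> L \<and> head a \<notin> L"
      have "0 \<le> \<pi> (head a) - \<phi> (head a)"
        using a ends \<phi>D pi_range unfolding L_def by (cases "head a \<in> D") auto
      then show "\<pi> (tail a) - \<pi> (head a) \<le> \<phi> (tail a) - \<phi> (head a)" using a unfolding L_def by auto
    qed
    show "\<forall>a\<in>A. head a \<in> L \<and> tail a \<notin> L \<longrightarrow> \<phi> (tail a) - \<phi> (head a) \<le> \<pi> (tail a) - \<pi> (head a)"
    proof (intro ballI impI)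
      fix a assume a: "a \<in> A" "head a \<in> L \<and> tail a \<notin> L"
      have "0 \<le> \<pi> (tail a) - \<phi> (tail a)"
        using a ends \<phi>D pi_range unfolding L_def by (cases "tail a \<in> D") auto
      then show "\<phi> (tail a) - \<phi> (head a) \<le> \<pi> (tail a) - \<pi> (head a)" using a unfolding L_def by auto
    qed
  qed
  have L\<phi>: "(\<Sum>v\<in>L. ?NB \<phi> v) = c"
    unfolding c_def by (rule sum.mono_neutral_right[OF finL SL]) (use \<phi>I in \<open>auto simp: L_def\<close>)
  have L\<pi>: "(\<Sum>v\<in>L. ?NB \<pi> v) = (\<Sum>v\<in>L. b v)"
    using LV bNB by (intro sum.cong) auto
  have finX: "finite X" using XT TpV TmV finV by (meson finite_subset le_sup_iff)
  have X_split: "bx = (\<Sum>v\<in>S. b v) + (\<Sum>v\<in>X \<inter> Tm. b v)"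
  proof -
    have "X = S \<union> (X \<inter> Tm)" using XT unfolding S_def by auto
    moreover have "S \<inter> (X \<inter> Tm) = {}" using disj unfolding S_def by auto
    ultimately show ?thesis unfolding bx_def using finX
      by (metis finite_Int finite_Un sum.union_disjoint)
  qed
  have L_split: "(\<Sum>v\<in>L. b v) = (\<Sum>v\<in>L \<inter> Tm. b v) + (\<Sum>v\<in>L - Tm. b v)"
    using finL by (rule sum.Int_Diff)
  have i1: "(\<Sum>v\<in>X \<inter> Tm. b v) \<le> (\<Sum>v\<in>L \<inter> Tm. b v)"
  proof -
    have sub: "L \<inter> Tm \<subseteq> X \<inter> Tm" unfolding L_def D_def by auto
    have "(\<Sum>v\<in>X \<inter> Tm. b v) = (\<Sum>v\<in>(X \<inter> Tm) - (L \<inter> Tm). b v) + (\<Sum>v\<in>L \<inter> Tm. b v)"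
      using sub finX by (intro sum.subset_diff) auto
    moreover have "(\<Sum>v\<in>(X \<inter> Tm) - (L \<inter> Tm). b v) \<le> 0" using bTm by (intro sum_nonpos) auto
    ultimately show ?thesis by simp
  qed
  have i2: "(\<Sum>v\<in>S. b v) \<le> (\<Sum>v\<in>L - Tm. b v)"
  proof (rule sum_mono2)
    show "finite (L - Tm)" using finL by simp
    show "S \<subseteq> L - Tm" using SL disj unfolding S_def by auto
    show "0 \<le> b v" if v: "v \<in> L - Tm - S" for v
    proof -
      have "v \<in> V" using LV v by auto
      then show "0 \<le> b v" using v bTp bO by (cases "v \<in> Tp") auto
    qed
  qed
  have cge: "bx \<le> c" using key L\<phi> L\<pi> X_split L_split i1 i2 by linarith
  have bx0: "0 \<le> bx" using bX unfolding bx_def by simp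
  define \<mu> where "\<mu> = bx / c"
  have \<mu>0: "0 \<le> \<mu>" and \<mu>1: "\<mu> \<le> 1" using cge bx0 unfolding \<mu>_def
    by (auto simp: divide_le_eq_1)
  have \<mu>c: "\<mu> * c = bx" using cge bx0 unfolding \<mu>_def by (cases "c = 0") auto
  define b' where "b' v = \<mu> * ?NB \<phi> v" for v
  define f' where "f' a = \<mu> * ?F \<phi> a" for a
  define \<pi>' where "\<pi>' v = \<mu> powr r * \<phi> v" for v
  show ?thesis
  proof (intro exI conjI)
    show "balanced V b'" unfolding balanced_def b'_def
      using NB_balanced[OF finA finV ends] by (simp add: sum_distrib_left[symmetric])
    show "pb_transshipment V A tail head \<beta> r b' f' \<pi>'"
      unfolding pb_transshipment_def
    proof (intro conjI ballI)
      fix a assume a: "a \<in> A"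
      have e: "\<phi> (tail a) - \<phi> (head a) = \<beta> a * (sgn (?F \<phi> a) * \<bar>?F \<phi> a\<bar> powr r)"
        unfolding FF_def using gf_inv[of "\<beta> a" r] bpos r a by simp
      show "\<pi>' (tail a) - \<pi>' (head a) = \<beta> a * (sgn (f' a) * \<bar>f' a\<bar> powr r)"
      proof (cases "\<mu> = 0")
        case True then show ?thesis unfolding \<pi>'_def f'_def by simp
      next
        case False
        then have mp: "\<mu> > 0" using \<mu>0 by simp
        have "\<pi>' (tail a) - \<pi>' (head a) = \<mu> powr r * (\<phi> (tail a) - \<phi> (head a))"
          unfolding \<pi>'_def by (simp add: algebra_simps)
        also have "\<dots> = \<beta> a * (sgn (f' a) * \<bar>f' a\<bar> powr r)"
          unfolding e f'_def using mp by (simp add: sgn_mult abs_mult powr_mult)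
        finally show ?thesis .
      qed
    next
      fix v assume "v \<in> V"
      show "(\<Sum>a\<in>{a\<in>A. tail a = v}. f' a) - (\<Sum>a\<in>{a\<in>A. head a = v}. f' a) = b' v"
        unfolding f'_def b'_def NB_def by (simp add: sum_distrib_left[symmetric] right_diff_distrib)
    qed
    show "\<forall>v\<in>V. 0 \<le> \<pi>' v \<and> \<pi>' v \<le> \<pi>bar"
    proof
      fix v assume v: "v \<in> V"
      have p1: "\<mu> powr r \<le> 1" using \<mu>0 \<mu>1 r by (intro powr_le1) auto
      have "\<mu> powr r * \<phi> v \<le> 1 * \<pi>bar"
        using p1 \<phi>rng v by (intro mult_mono) auto
      then show "0 \<le> \<pi>' v \<and> \<pi>' v \<le> \<pi>bar" using \<phi>rng v unfolding \<pi>'_def by simp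
    qed
    show "{v\<in>V. b' v > 0} \<subseteq> Tp \<inter> X"
    proof
      fix v assume "v \<in> {v\<in>V. b' v > 0}"
      then have v: "v \<in> V" "0 < \<mu> * ?NB \<phi> v" unfolding b'_def by auto
      then have "0 < ?NB \<phi> v" using \<mu>0 by (simp add: zero_less_mult_iff)
      then have "v \<in> S" using v \<phi>I NBD by force
      then show "v \<in> Tp \<inter> X" unfolding S_def .
    qed
    show "{v\<in>V. b' v < 0} \<subseteq> Tm - X"
    proof
      fix v assume "v \<in> {v\<in>V. b' v < 0}"
      then have v: "v \<in> V" "\<mu> * ?NB \<phi> v < 0" unfolding b'_def by auto
      then have "?NB \<phi> v < 0" using \<mu>0 by (simp add: mult_less_0_iff)
      then have "v \<in> D" using v \<phi>I NBS by force
      then show "v \<in> Tm - X" unfolding D_def .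
    qed
    show "(\<Sum>v\<in>Tp \<inter> X. b' v) = (\<Sum>v\<in>X. b v)"
      using \<mu>c unfolding b'_def c_def bx_def S_def by (simp add: sum_distrib_left)
  qed
qed

end
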